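(* Let $0<k_{\max}<\infty$ and $I=[-k_{\max},k_{\max}]$. Then $$\sup_{\psi\in L^2(I),\ \|\psi\|=1}\ \sup_{x\in\mathbb R}|(\mathcal F\psi)(x)|^2=\frac{k_{\max}}{\pi},$$ so the minimal length in terms of min-entropy is $$\Gamma^\infty_{\min}:=\inf_{\psi\in L^2(I),\|\psi\|=1}\Big[-\log\big(\operatorname{ess\,sup}_x|(\mathcal F\psi)(x)|^2\big)\Big]=-\log\frac{k_{\max}}{\pi}.$$ In particular, if the variance-based minimal length is normalised, $\pi^2/(4k_{\max}^2)=1$, then $\Gamma^\infty_{\min}=\log2$ (one bit).
   Context: $(\mathcal F\psi)(x)=\frac1{\sqrt{2\pi}}\int_Ie^{ikx}\psi(k)\,dk$; $\log$ is the natural logarithm. The min-entropy of a probability density $w$ is $h_\infty(w)=-\log(\operatorname{ess\,sup}_x w(x))$. In the standard model of a modified algebra, $k_{\max}=\int_0^\infty dp/f(p)$ is the momentum cut-off and states are elements of $L^2(I)$ in the unmodified-momentum representation. *)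

theory Defs
  imports "HOL-Analysis.Analysis" "HOL-Probability.Essential_Supremum"
begin

definition Iint :: "real \<Rightarrow> real set" where
  "Iint kmax = {-kmax..kmax}"

text \<open>Normalised states in L2(I), represented by measurable square-integrable
  functions (values outside I are irrelevant).\<close>
definition states :: "real \<Rightarrow> (real \<Rightarrow> complex) set" where
  "states kmax = {\<psi>. \<psi> \<in> borel_measurable lborel
      \<and> set_integrable lborel (Iint kmax) (\<lambda>k. (cmod (\<psi> k))\<^sup>2)
      \<and> (LINT k:Iint kmax|lborel. (cmod (\<psi> k))\<^sup>2) = 1}"

definition fourierI :: "real \<Rightarrow> (real \<Rightarrow> complex) \<Rightarrow> real \<Rightarrow> complex" where
  "fourierI kmax \<psi> x = complex_of_real (1 / sqrt (2 * pi)) *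
      (LINT k:Iint kmax|lborel. exp (\<i> * complex_of_real (k * x)) * \<psi> k)"

definition min_entropy :: "(real \<Rightarrow> real) \<Rightarrow> ereal" where
  "min_entropy w = (let s = esssup lborel (\<lambda>x. ereal (w x)) in
      if s = \<infinity> then -\<infinity> else if s \<le> 0 then \<infinity> else ereal (- ln (real_of_ereal s)))"

end

theory Submission
  imports Defs
begin

lemma meas_w:
  assumes "\<psi> \<in> states K"
  shows "(\<lambda>x. ereal ((cmod (fourierI K \<psi> x))\<^sup>2)) \<in> borel_measurable lborel"
proof -
  have [measurable]: "\<psi> \<in> borel_measurable lborel" using assms by (simp add: states_def)
  have "(\<lambda>x. LINT k:Iint K|lborel. exp (\<i> * complex_of_real (k * x)) * \<psi> k) \<in> borel_measurable lborel"
    unfolding set_lebesgue_integral_def Iint_def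
    by measurable
  then show ?thesis unfolding fourierI_def by measurable
qed

lemma bound_w:
  assumes "\<psi> \<in> states K" "0 < K"
  shows "(cmod (fourierI K \<psi> x))\<^sup>2 \<le> K / pi"
proof -
  have m[measurable]: "\<psi> \<in> borel_measurable lborel" 
    and si: "set_integrable lborel (Iint K) (\<lambda>k. (cmod (\<psi> k))\<^sup>2)"
    and one: "(LINT k:Iint K|lborel. (cmod (\<psi> k))\<^sup>2) = 1" using assms by (auto simp: states_def)
  define a where "a = sqrt (2*K)"
  have a0: "a > 0" using assms by (simp add: a_def)
  have si1: "set_integrable lborel (Iint K) (\<lambda>k. (1::real))"
    using assms unfolding Iint_def set_integrable_def by (auto intro!: integrable_real_indicator)
  have m1: "(LINT k:Iint K|lborel. (1::real)) = 2*K"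
    using assms unfolding Iint_def by (simp add: set_lebesgue_integral_def)
  have si2: "set_integrable lborel (Iint K) (\<lambda>k. (a * (cmod (\<psi> k))\<^sup>2 + 1/a)/2)"
    using si si1 by (intro set_integrable_divide set_integral_add(1) set_integrable_mult_right)
  have pt: "cmod (\<psi> k) \<le> (a * (cmod (\<psi> k))\<^sup>2 + 1/a)/2" for k
  proof -
    have "0 \<le> (a * cmod (\<psi> k) - 1)\<^sup>2" by simp
    then have "2 * a * cmod (\<psi> k) \<le> a * (a * (cmod (\<psi> k))\<^sup>2) + 1" by (simp add: power2_eq_square algebra_simps)
    then show ?thesis using a0 by (simp add: field_simps power2_eq_square)
  qed
  have si3: "set_integrable lborel (Iint K) (\<lambda>k. exp (\<i> * complex_of_real (k * x)) * \<psi> k)"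
    unfolding set_integrable_def
    apply (rule Bochner_Integration.integrable_bound[OF si2[unfolded set_integrable_def]])
     apply (unfold Iint_def, measurable)
    using pt by (auto simp: indicator_def norm_mult intro!: AE_I2 order_trans[OF _ abs_ge_self])
  have "cmod (LINT k:Iint K|lborel. exp (\<i> * complex_of_real (k * x)) * \<psi> k)
       \<le> (LINT k:Iint K|lborel. cmod (exp (\<i> * complex_of_real (k * x)) * \<psi> k))"
    by (rule set_integral_norm_bound[OF si3])
  also have "\<dots> = (LINT k:Iint K|lborel. cmod (\<psi> k))"
    by (simp add: norm_mult)
  also have "\<dots> \<le> (LINT k:Iint K|lborel. (a * (cmod (\<psi> k))\<^sup>2 + 1/a)/2)"
    unfolding set_lebesgue_integral_def
    apply (rule integral_mono'[OF si2[unfolded set_integrable_def]])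
    using pt a0 by (auto simp: indicator_def)
  also have "\<dots> = (a * 1 + 1/a * (2*K))/2"
    using si si1 one m1
    by (simp add: set_integral_divide_zero set_integral_add set_integral_mult_right)
  also have "\<dots> = a" using a0 by (simp add: a_def field_simps)
  finally have J: "cmod (LINT k:Iint K|lborel. exp (\<i> * complex_of_real (k * x)) * \<psi> k) \<le> a" .
  have "cmod (fourierI K \<psi> x) \<le> 1 / sqrt (2*pi) * a"
  proof -
    have "cmod (fourierI K \<psi> x) = \<bar>1 / sqrt (2*pi)\<bar> * cmod (LINT k:Iint K|lborel. exp (\<i> * complex_of_real (k * x)) * \<psi> k)"
      unfolding fourierI_def norm_mult norm_of_real ..
    also have "\<dots> \<le> \<bar>1 / sqrt (2*pi)\<bar> * a" by (rule mult_left_mono[OF J]) simp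
    finally show ?thesis by simp
  qed
  then have "(cmod (fourierI K \<psi> x))\<^sup>2 \<le> (1 / sqrt (2*pi) * a)\<^sup>2"
    by (intro power_mono) auto
  also have "\<dots> = K / pi" using assms by (simp add: a_def power_mult_distrib power_divide)
  finally show ?thesis .
qed

lemma cos_lb: "1 - \<bar>t\<bar> \<le> cos (t::real)"
proof -
  have c: "cos t = 1 - 2 * sin (t/2) ^ 2" using cos_double_sin[of "t/2"] by simp
  have "sin (t/2) ^ 2 = \<bar>sin (t/2)\<bar> * \<bar>sin (t/2)\<bar>" by (simp add: power2_eq_square)
  also have "\<dots> \<le> \<bar>sin (t/2)\<bar>" by (rule mult_left_le[OF abs_sin_le_one abs_ge_zero])
  also have "\<dots> \<le> \<bar>t/2\<bar>" by (rule abs_sin_x_le_abs_x)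
  finally show ?thesis using c by simp
qed

definition psi0 :: "real \<Rightarrow> real \<Rightarrow> complex" where
  "psi0 K = (\<lambda>k. complex_of_real (1 / sqrt (2*K)))"

lemma psi0_states: assumes "0 < K" shows "psi0 K \<in> states K"
proof -
  have si1: "set_integrable lborel (Iint K) (\<lambda>k. (1::real))"
    using assms unfolding Iint_def set_integrable_def by (auto intro!: integrable_real_indicator)
  have e: "(cmod (psi0 K k))\<^sup>2 = 1 / (2*K)" for k
  proof -
    have "(cmod (psi0 K k))\<^sup>2 = (1 / sqrt (2*K))\<^sup>2" unfolding psi0_def norm_of_real power2_abs ..
    also have "\<dots> = 1 / (2*K)" using assms by (simp add: power_divide)
    finally show ?thesis .
  qed
  have si2: "set_integrable lborel (Iint K) (\<lambda>k. (cmod (psi0 K k))\<^sup>2)"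
    unfolding e using si1 by simp
  have i2: "(LINT k:Iint K|lborel. (cmod (psi0 K k))\<^sup>2) = 1"
    unfolding e using assms by (simp add: Iint_def set_lebesgue_integral_def)
  have m: "psi0 K \<in> borel_measurable lborel" unfolding psi0_def by simp
  show ?thesis unfolding states_def using m si2 i2 by blast
qed


lemma cos_integral_lb:
  assumes "0 < K" "\<bar>x\<bar> \<le> 1/K" "c > 0"
  shows "2*K*((1 - K*\<bar>x\<bar>)*c) \<le> (LINT k:Iint K|lborel. cos (k*x) * c)"
proof -
  define y where "y = K * \<bar>x\<bar>"
  have si1: "set_integrable lborel (Iint K) (\<lambda>k. (1::real))"
    using assms unfolding Iint_def set_integrable_def by (auto intro!: integrable_real_indicator)
  have ic: "integrable lborel (\<lambda>k. indicator (Iint K) k *\<^sub>R c)"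
    using si1 unfolding set_integrable_def by simp
  have "(LINT k:Iint K|lborel. (1 - y) * c) \<le> (LINT k:Iint K|lborel. cos (k*x) * c)"
  proof (rule set_integral_mono)
    have "integrable lborel (\<lambda>k. (1-y) * (indicator (Iint K) k *\<^sub>R c))" using ic by simp
    then show "set_integrable lborel (Iint K) (\<lambda>k. (1 - y) * c)" unfolding set_integrable_def by (simp add: ac_simps)
    show "set_integrable lborel (Iint K) (\<lambda>k. cos (k*x) * c)"
      unfolding set_integrable_def
      apply (rule Bochner_Integration.integrable_bound[OF ic])
       apply (unfold Iint_def, measurable)
      using assms(3) by (auto simp: indicator_def abs_mult intro!: AE_I2 mult_left_le_one_le)
    fix k assume "k \<in> Iint K"
    then have "\<bar>k\<bar> \<le> K" by (auto simp: Iint_def)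
    then have "\<bar>k*x\<bar> \<le> y" unfolding y_def abs_mult by (intro mult_right_mono) auto
    then have "1 - y \<le> cos (k*x)" using cos_lb[of "k*x"] by linarith
    then show "(1 - y) * c \<le> cos (k*x) * c" using assms(3) by (intro mult_right_mono) auto
  qed
  then show ?thesis using assms by (simp add: y_def Iint_def set_lebesgue_integral_def mult_ac)
qed


lemma lower_w0:
  assumes "0 < K" "\<bar>x\<bar> \<le> 1/K"
  shows "K/pi - 2*K^2*\<bar>x\<bar>/pi \<le> (cmod (fourierI K (psi0 K) x))\<^sup>2"
proof -
  define c where "c = 1 / sqrt (2*K)"
  have c0: "c > 0" using assms by (simp add: c_def)
  define y where "y = K * \<bar>x\<bar>"
  have y0: "0 \<le> y" "y \<le> 1" using assms by (auto simp: y_def field_simps)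
  have si1: "set_integrable lborel (Iint K) (\<lambda>k. (1::real))"
    using assms unfolding Iint_def set_integrable_def by (auto intro!: integrable_real_indicator)
  have ic: "integrable lborel (\<lambda>k. indicator (Iint K) k *\<^sub>R c)"
    using si1 unfolding set_integrable_def by simp
  have nb: "norm (exp (\<i> * complex_of_real (k * x)) * psi0 K k) = c" for k
    using c0 by (simp only: norm_mult norm_exp_i_times psi0_def norm_of_real) (simp add: c_def)
  have sic: "integrable lborel (\<lambda>k. indicator (Iint K) k *\<^sub>R (exp (\<i> * complex_of_real (k * x)) * psi0 K k))"
    apply (rule Bochner_Integration.integrable_bound[OF ic])
    subgoal unfolding Iint_def psi0_def by measurable
    using c0 nb by (auto simp: indicator_def intro!: AE_I2)
  have re: "Re (indicator (Iint K) k *\<^sub>R (exp (\<i> * complex_of_real (k * x)) * psi0 K k)) = indicator (Iint K) k *\<^sub>R (cos (k*x) * c)" for k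
    by (simp add: psi0_def c_def Re_exp)
  define J where "J = (LINT k:Iint K|lborel. exp (\<i> * complex_of_real (k * x)) * psi0 K k)"
  have "Re J = (LINT k:Iint K|lborel. cos (k*x) * c)"
    unfolding J_def set_lebesgue_integral_def
    by (subst integral_Re[OF sic, symmetric]) (simp only: re)
  then have R: "2*K*((1-y)*c) \<le> Re J" using cos_integral_lb[OF assms c0] by (simp add: y_def)
  have "2*K*((1-y)*c) \<le> cmod J" using R complex_Re_le_cmod order_trans by blast
  moreover have "0 \<le> 2*K*((1-y)*c)" using assms y0 c0 by auto
  ultimately have "(2*K*((1-y)*c))^2 \<le> (cmod J)^2" by (intro power_mono)
  moreover have "(cmod (fourierI K (psi0 K) x))\<^sup>2 = (cmod J)^2 / (2*pi)"
    unfolding fourierI_def J_def norm_mult norm_of_real by (simp add: power_mult_distrib power_divide)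
  ultimately have "(2*K*((1-y)*c))^2 / (2*pi) \<le> (cmod (fourierI K (psi0 K) x))\<^sup>2"
    by (simp add: divide_right_mono)
  moreover have "(2*K*((1-y)*c))^2 / (2*pi) = K/pi * (1-y)^2"
  proof -
    have "c^2 = 1/(2*K)" using assms by (simp add: c_def power_divide)
    have "(2*K*((1-y)*c))^2 = 4*K^2*(1-y)^2*c^2" by algebra
    also have "\<dots> = 4*K^2*(1-y)^2/(2*K)" using \<open>c^2 = 1/(2*K)\<close> by simp
    also have "\<dots> = 2*K * (1-y)^2" using assms by (simp add: power2_eq_square field_simps)
    finally have "(2*K*((1-y)*c))^2 = 2*K * (1-y)^2" .
    then show ?thesis by simp
  qed
  moreover have "K/pi * (1 - 2*y) \<le> K/pi * (1-y)^2"
    using assms by (intro mult_left_mono) (auto simp: power2_eq_square algebra_simps)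
  moreover have "K/pi - 2*K^2*\<bar>x\<bar>/pi = K/pi * (1 - 2*y)"
    by (simp add: y_def power2_eq_square field_simps)
  ultimately show ?thesis by linarith
qed

lemma esssup_w0:
  assumes K: "0 < K"
  shows "esssup lborel (\<lambda>x. ereal ((cmod (fourierI K (psi0 K) x))\<^sup>2)) = ereal (K/pi)"
    (is "esssup lborel ?w = _")
proof (rule antisym)
  show "esssup lborel ?w \<le> ereal (K/pi)"
    by (rule esssup_I[OF meas_w[OF psi0_states[OF K]]]) (auto intro!: AE_I2 bound_w[OF psi0_states[OF K] K])
next
  show "ereal (K/pi) \<le> esssup lborel ?w"
  proof (rule ccontr)
    assume "\<not> ereal (K/pi) \<le> esssup lborel ?w"
    then have "esssup lborel ?w < ereal (K/pi)" by simp
    then obtain t :: real where t1: "esssup lborel ?w < ereal t" and t2: "ereal t < ereal (K/pi)"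
      using ereal_dense2 by blast
    have tK: "t < K/pi" using t2 by simp
    have AE: "AE x in lborel. ?w x \<le> ereal t"
      using esssup_AE[where M=lborel and f="?w"]
    proof eventually_elim
      case (elim x) then show ?case using t1 by (meson less_imp_le order_trans)
    qed
    define e where "e = K/pi - t"
    have e0: "e > 0" using tK by (simp add: e_def)
    define d where "d = min (1/K) (e*pi/(4*K^2))"
    have d0: "d > 0" using K e0 by (simp add: d_def)
    have big: "t < (cmod (fourierI K (psi0 K) x))\<^sup>2" if "x \<in> {-d<..<d}" for x
    proof -
      have ax: "\<bar>x\<bar> < d" using that by auto
      then have "\<bar>x\<bar> \<le> 1/K" by (simp add: d_def)
      note L = lower_w0[OF K this]
      have "2*K^2*\<bar>x\<bar>/pi \<le> 2*K^2*(e*pi/(4*K^2))/pi"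
        using ax K by (intro divide_right_mono mult_left_mono) (auto simp: d_def)
      also have "\<dots> = e/2" using K by (simp add: field_simps power2_eq_square)
      finally show ?thesis using L e0 by (simp add: e_def)
    qed
    have "AE x in lborel. x \<notin> {-d<..<d}"
      using AE
    proof eventually_elim
      case (elim x) then show ?case using big[of x] by force
    qed
    then have "emeasure lborel {-d<..<d} = 0"
      by (subst (asm) AE_iff_measurable[of "{-d<..<d}"]) auto
    moreover have "emeasure lborel {-d<..<d} = ennreal (d - (-d))"
      using d0 by (intro emeasure_lborel_Ioo) simp
    ultimately show False using d0 by simp
  qed
qed

lemma w0_at0: assumes K: "0 < K" shows "(cmod (fourierI K (psi0 K) 0))\<^sup>2 = K/pi"
  using bound_w[OF psi0_states[OF K] K, of 0] lower_w0[OF K, of 0] K by simp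

lemma min_entropy_lb:
  assumes K: "0 < K" and p: "\<psi> \<in> states K"
  shows "ereal (- ln (K/pi)) \<le> min_entropy (\<lambda>x. (cmod (fourierI K \<psi> x))\<^sup>2)"
proof -
  define s where "s = esssup lborel (\<lambda>x. ereal ((cmod (fourierI K \<psi> x))\<^sup>2))"
  have sle: "s \<le> ereal (K/pi)" unfolding s_def
    by (rule esssup_I[OF meas_w[OF p]]) (auto intro!: AE_I2 bound_w[OF p K])
  show ?thesis
  proof (cases "s \<le> 0")
    case True
    then have "s \<noteq> \<infinity>" by auto
    then show ?thesis unfolding min_entropy_def Let_def s_def[symmetric] using True by simp
  next
    case False
    then obtain r where r: "s = ereal r" using sle by (cases s) auto
    have r0: "0 < r" using False r by simp
    have rK: "r \<le> K/pi" using sle r by simp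
    have "- ln (K/pi) \<le> - ln r" using r0 rK by simp
    then show ?thesis unfolding min_entropy_def Let_def s_def[symmetric] using r r0 by simp
  qed
qed

lemma min_entropy_w0:
  assumes K: "0 < K"
  shows "min_entropy (\<lambda>x. (cmod (fourierI K (psi0 K) x))\<^sup>2) = ereal (- ln (K/pi))"
proof -
  have "\<not> K / pi \<le> 0" using K by (simp add: not_le)
  then show ?thesis unfolding min_entropy_def Let_def esssup_w0[OF K] by simp
qed

theorem mainTheorem9:
  fixes kmax :: real
  assumes "0 < kmax"
  shows "(SUP \<psi>\<in>states kmax. SUP x::real. ereal ((cmod (fourierI kmax \<psi> x))\<^sup>2))
           = ereal (kmax / pi)
     \<and> (INF \<psi>\<in>states kmax. min_entropy (\<lambda>x. (cmod (fourierI kmax \<psi> x))\<^sup>2))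
           = ereal (- ln (kmax / pi))
     \<and> (pi\<^sup>2 / (4 * kmax\<^sup>2) = 1 \<longrightarrow>
         (INF \<psi>\<in>states kmax. min_entropy (\<lambda>x. (cmod (fourierI kmax \<psi> x))\<^sup>2))
           = ereal (ln 2))"
proof -
  note K = assms
  have P1: "(SUP \<psi>\<in>states kmax. SUP x::real. ereal ((cmod (fourierI kmax \<psi> x))\<^sup>2)) = ereal (kmax / pi)"
  proof (rule antisym)
    show "(SUP \<psi>\<in>states kmax. SUP x::real. ereal ((cmod (fourierI kmax \<psi> x))\<^sup>2)) \<le> ereal (kmax / pi)"
      by (intro SUP_least) (simp add: bound_w K)
    have "ereal (kmax/pi) \<le> (SUP x::real. ereal ((cmod (fourierI kmax (psi0 kmax) x))\<^sup>2))"
      by (rule SUP_upper2[of 0]) (simp_all add: w0_at0[OF K])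
    then show "ereal (kmax / pi) \<le> (SUP \<psi>\<in>states kmax. SUP x::real. ereal ((cmod (fourierI kmax \<psi> x))\<^sup>2))"
      by (rule SUP_upper2[OF psi0_states[OF K]])
  qed
  have P2: "(INF \<psi>\<in>states kmax. min_entropy (\<lambda>x. (cmod (fourierI kmax \<psi> x))\<^sup>2)) = ereal (- ln (kmax / pi))"
  proof (rule antisym)
    show "(INF \<psi>\<in>states kmax. min_entropy (\<lambda>x. (cmod (fourierI kmax \<psi> x))\<^sup>2)) \<le> ereal (- ln (kmax / pi))"
      by (rule INF_lower2[OF psi0_states[OF K]]) (simp add: min_entropy_w0[OF K])
    show "ereal (- ln (kmax / pi)) \<le> (INF \<psi>\<in>states kmax. min_entropy (\<lambda>x. (cmod (fourierI kmax \<psi> x))\<^sup>2))"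
      by (intro INF_greatest min_entropy_lb[OF K])
  qed
  have P3: "kmax / pi = 1/2" if h: "pi\<^sup>2 / (4 * kmax\<^sup>2) = 1"
  proof -
    have "pi^2 = (2*kmax)^2" using h K by (simp add: field_simps power_mult_distrib)
    then have "pi = 2*kmax" using K by (subst (asm) power2_eq_iff_nonneg) auto
    then show ?thesis using K by simp
  qed
  have l: "- ln (1/2::real) = ln 2" by (simp add: ln_div)
  have P3': "pi\<^sup>2 / (4 * kmax\<^sup>2) = 1 \<longrightarrow>
         (INF \<psi>\<in>states kmax. min_entropy (\<lambda>x. (cmod (fourierI kmax \<psi> x))\<^sup>2)) = ereal (ln 2)"
  proof
    assume h: "pi\<^sup>2 / (4 * kmax\<^sup>2) = 1"
    show "(INF \<psi>\<in>states kmax. min_entropy (\<lambda>x. (cmod (fourierI kmax \<psi> x))\<^sup>2)) = ereal (ln 2)"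
      unfolding P2 P3[OF h] l ..
  qed
  show ?thesis using P1 P2 P3' by blast
qed

end
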